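(* For all integers $i,j,m\ge0$, $$\overline{\mathfrak{C}}_{ijm}=\frac{(i+j-m+2)(i-j+m+2)(-i+j+m+2)(i+j+m+6)}{4\sqrt{2\pi(i+1)(i+3)(j+1)(j+3)(m+1)(m+3)}}\cdot\mathbf{1}(|j-m|\le i\le j+m)\,\mathbf{1}(|i-m|\le j\le i+m)\,\mathbf{1}(|i-j|\le m\le i+j)$$ $$\cdot\,\mathbf{1}(j+m-i\in2\mathbb{N}\cup\{0\})\,\mathbf{1}(i+m-j\in2\mathbb{N}\cup\{0\})\,\mathbf{1}(i+j-m\in2\mathbb{N}\cup\{0\}).$$
   Context: $\mathfrak{e}_n(x)=\mathfrak{N}_nP_n^{(3/2,3/2)}(\cos x)$ with $P_n^{(3/2,3/2)}$ the Jacobi polynomial, $\omega_n=n+2$ and $\mathfrak{N}_n=\frac{\sqrt{\omega_n\Gamma(1+n)\Gamma(4+n)}}{2\sqrt2\,\Gamma(5/2+n)}$. $\overline{\mathfrak{C}}_{ijm}=\int_0^\pi\mathfrak{e}_i\mathfrak{e}_j\mathfrak{e}_m\sin^4x\,dx$. $\mathbf{1}(\cdot)$ is the indicator of the condition. *)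

theory Defs
  imports "HOL-Analysis.Analysis"
begin

definition jacobiP :: "nat \<Rightarrow> real \<Rightarrow> real \<Rightarrow> real \<Rightarrow> real" where
  "jacobiP n a b x =
     (\<Sum>s\<le>n. ((real n + a) gchoose (n - s)) * ((real n + b) gchoose s)
              * ((x - 1) / 2) ^ s * ((x + 1) / 2) ^ (n - s))"

definition omega_n :: "nat \<Rightarrow> real" where
  "omega_n n = real n + 2"

definition normN :: "nat \<Rightarrow> real" where
  "normN n = sqrt (omega_n n * Gamma (1 + real n) * Gamma (4 + real n))
             / (2 * sqrt 2 * Gamma (5/2 + real n))"

definition efun :: "nat \<Rightarrow> real \<Rightarrow> real" where
  "efun n x = normN n * jacobiP n (3/2) (3/2) (cos x)"

definition Cbar :: "nat \<Rightarrow> nat \<Rightarrow> nat \<Rightarrow> real" where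
  "Cbar i j m = integral {0..pi} (\<lambda>x. efun i x * efun j x * efun m x * sin x ^ 4)"

definition ind :: "bool \<Rightarrow> real" where
  "ind P = (if P then 1 else 0)"

end

theory Submission
  imports Defs
begin


lemma gch_step: "of_nat (Suc k) * ((a::real) gchoose Suc k) = (a - of_nat k) * (a gchoose k)"
  using gbinomial_mult_1[of a k] by (simp add: algebra_simps)

lemma Acoef_alg:
  fixes X Y B Fn F1 F2 a b :: real
  assumes "X * ((a + 3/2) * (a + 1)) = Y * ((b + 1) * (b + 3/2))"
    "Y = B * (Fn / (F1 * ((2*b+3) * (2*b+2) * F2)))" "F1 > 0" "F2 > 0" "a \<ge> 0" "b \<ge> 0"
  shows "X = B * (Fn / (((2*a+3)*(2*a+2)*F1) * F2))"
proof -
  have pa: "(a + 3/2) * (a + 1) > 0" "(b + 3/2) * (b + 1) > 0" using assms by (simp_all add: add_pos_nonneg)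
  have h1: "(2*b+3)*(2*b+2) = 4*((b + 3/2) * (b + 1))" "(2*a+3)*(2*a+2) = 4*((a + 3/2) * (a + 1))"
    by (simp_all add: algebra_simps)
  define A where "A = (a + 3/2) * (a + 1)"
  define Bb where "Bb = (b + 3/2) * (b + 1)"
  have "X * A = Y * Bb" using assms(1) unfolding A_def Bb_def by (simp add: algebra_simps)
  moreover have "A > 0" "Bb > 0" using pa unfolding A_def Bb_def by auto
  ultimately have "X = Y * Bb / A" by (simp add: field_simps)
  also have "\<dots> = B * (Fn / (F1 * (4 * Bb * F2))) * Bb / A" using assms(2) h1 unfolding Bb_def by simp
  also have "\<dots> = B * (Fn / ((4*A*F1) * F2))" using \<open>A > 0\<close> \<open>Bb > 0\<close> assms(3,4) by (simp add: field_simps)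
  finally show ?thesis using h1 unfolding A_def by simp
qed

lemma Acoef:
  fixes n j :: nat
  assumes "j \<le> n"
  shows "((real n + 1/2) gchoose (n-j)) * ((real n + 1/2) gchoose j)
     = ((real n + 1/2) gchoose n) * (fact (2*n+1) / (fact (2*j+1) * fact (2*n+1-2*j)))"
  using assms
proof (induction j)
  case 0
  then show ?case by simp
next
  case (Suc j)
  obtain d where d: "n = j + 1 + d" using Suc.prems by (metis add.commute less_eqE Suc_eq_plus1)
  define r where "r = real n + 1/2"
  have IH: "(r gchoose (Suc d)) * (r gchoose j)
     = (r gchoose n) * (fact (2*n+1) / (fact (2*j+1) * fact (2*n+1-2*j)))"
    using Suc d unfolding r_def by (simp add: Suc_diff_le)
  have e1: "of_nat (Suc d) * (r gchoose Suc d) = (r - of_nat d) * (r gchoose d)" by (rule gch_step)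
  have e2: "of_nat (Suc j) * (r gchoose Suc j) = (r - of_nat j) * (r gchoose j)" by (rule gch_step)
  have f1: "fact (2*j+1+2) = (real (2*j+3)) * (2*j+2) * (fact (2*j+1)::real)"
    by (simp add: fact_Suc algebra_simps numeral_3_eq_3)
  have f2: "fact (2*n+1-2*j) = (real (2*d+3)) * (2*d+2) * (fact (2*n+1-2*(j+1))::real)"
  proof -
    have "2*n+1-2*j = 2*d+1+2" "2*n+1-2*(j+1) = 2*d+1" using d by auto
    then show ?thesis by (simp add: fact_Suc algebra_simps numeral_3_eq_3)
  qed
  have rd: "r - of_nat d = real j + 3/2" "r - of_nat j = real d + 3/2" using d unfolding r_def by auto
  have "n - Suc j = d" using d by simp
  then have goal: "?case \<longleftrightarrow> (r gchoose d) * (r gchoose Suc j)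
     = (r gchoose n) * (fact (2*n+1) / (fact (2*(j+1)+1) * fact (2*n+1-2*(j+1))))"
    unfolding r_def by simp
  have key: "(r gchoose d) * (r gchoose Suc j) * ((real j + 3/2) * (real j + 1))
      = (r gchoose Suc d) * (r gchoose j) * ((real d + 1) * (real d + 3/2))"
  proof -
    have "(r gchoose d) * (r gchoose Suc j) * ((real j + 3/2) * (real j + 1))
       = ((r - of_nat d) * (r gchoose d)) * (of_nat (Suc j) * (r gchoose Suc j))"
      unfolding rd(1) by (simp add: field_simps)
    also have "\<dots> = (of_nat (Suc d) * (r gchoose Suc d)) * ((r - of_nat j) * (r gchoose j))"
      using e1 e2 by simp
    also have "\<dots> = (r gchoose Suc d) * (r gchoose j) * ((real d + 1) * (real d + 3/2))"
      unfolding rd(2) by (simp add: field_simps)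
    finally show ?thesis .
  qed
  have f2': "fact (2*n+1-2*(j+1)) = (fact (2*d+1)::real)" using d by (simp add: algebra_simps)
  have f2'': "fact (2*n+1-2*j) = (2*real d+3) * (2*real d+2) * (fact (2*d+1)::real)"
    using f2 f2' by simp
  have pos: "(real j + 3/2) * (real j + 1) > 0" by (simp add: add_pos_pos)
  have f1': "fact (2 * (j + 1) + 1) = (2*real j+3)*(2*real j+2)*(fact (2*j+1)::real)"
    using f1 by (simp add: algebra_simps)
  have X: "(r gchoose d) * (r gchoose Suc j) = (r gchoose n) * (fact (2*n+1) / (((2*real j+3)*(2*real j+2)*fact (2*j+1)) * fact (2*d+1)))"
    by (rule Acoef_alg[OF key IH[unfolded f2'']]) auto
  show ?case unfolding goal f2' f1' using X by (simp add: mult.assoc)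
qed
lemma sum_even_odd_split: "(\<Sum>k<2*M. (g::nat\<Rightarrow>real) k) = (\<Sum>j<M. g (2*j) + g (2*j+1))"
  by (induction M) (auto simp: algebra_simps)

lemma i_pow_even: "(\<i> * complex_of_real s) ^ (2*j) = complex_of_real ((-1)^j * s^(2*j))"
proof -
  have "(\<i> * complex_of_real s) ^ (2*j) = ((\<i> * complex_of_real s)^2)^j" by (simp only: power_mult)
  also have "(\<i> * complex_of_real s)^2 = - (complex_of_real s ^ 2)" by (simp add: power_mult_distrib)
  also have "(- (complex_of_real s ^ 2))^j = (-1)^j * (complex_of_real s ^ 2)^j" by (rule power_minus)
  finally show ?thesis by (simp add: power_mult)
qed

lemma Im_ofreal_mult: "Im (complex_of_real r * z) = r * Im z" by simp

lemma Im_i_pow_even: "Im ((\<i> * complex_of_real s) ^ (2*j) * z) = (-1)^j * s^(2*j) * Im z"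
  unfolding i_pow_even by (rule Im_ofreal_mult)

lemma Im_i_pow_odd: "Im ((\<i> * complex_of_real s) ^ (2*j+1) * complex_of_real z) = (-1)^j * s^(2*j+1) * z"
proof -
  have "(\<i> * complex_of_real s) ^ (2*j+1) = \<i> * complex_of_real ((-1)^j * s^(2*j+1))"
    unfolding power_add i_pow_even power_one_right by (simp add: algebra_simps)
  moreover have "Im (\<i> * complex_of_real a * complex_of_real b) = a * b" for a b by simp
  ultimately show ?thesis by (simp only:)
qed

lemma Im_ofnat_mult: "Im (of_nat a * w * z) = real a * Im (w * z)"
  by (simp add: mult.assoc)

lemma sin_expand:
  fixes phi :: real
  shows "sin (real (2*n+2) * phi) =
    (\<Sum>j\<le>n. real ((2*n+2) choose (2*j+1)) * (-1)^j * sin phi ^ (2*j+1) * cos phi ^ (2*n+1-2*j))"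
proof -
  define N where "N = 2*n+2"
  define s where "s = sin phi"
  define c where "c = cos phi"
  define g where "g k = real (N choose k) * Im ((\<i> * complex_of_real s)^k * complex_of_real (c^(N-k)))" for k
  have "cis phi = \<i> * complex_of_real s + complex_of_real c"
    unfolding s_def c_def by (simp add: complex_eq_iff)
  then have cN: "cis (real N * phi) = (\<Sum>k\<le>N. of_nat (N choose k) * (\<i> * complex_of_real s)^k * complex_of_real c^(N-k))"
  proof -
    have "cis (real N * phi) = (cis phi)^N" by (rule Complex.DeMoivre[symmetric])
    also have "\<dots> = (\<i> * complex_of_real s + complex_of_real c)^N" using \<open>cis phi = _\<close> by simp
    finally show ?thesis by (simp only: binomial_ring)
  qed
  have "sin (real N * phi) = Im (cis (real N * phi))" by simp
  also have "\<dots> = (\<Sum>k\<le>N. Im (of_nat (N choose k) * (\<i> * complex_of_real s)^k * complex_of_real c^(N-k)))"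
    unfolding cN by (rule Im_sum)
  also have "\<dots> = (\<Sum>k\<le>N. g k)"
    unfolding g_def Im_ofnat_mult of_real_power ..
  also have "\<dots> = (\<Sum>k<2*Suc n. g k)"
  proof -
    have "{..N} = insert (2*Suc n) {..<2*Suc n}" unfolding N_def by auto
    moreover have "g (2*Suc n) = 0"
      unfolding g_def by (simp only: Im_i_pow_even Im_complex_of_real mult_zero_right)
    ultimately show ?thesis by (simp only: sum.insert finite_lessThan lessThan_iff less_irrefl not_False_eq_True add_0)
  qed
  also have "\<dots> = (\<Sum>j<Suc n. g (2*j) + g (2*j+1))"
    by (rule sum_even_odd_split)
  also have "\<dots> = (\<Sum>j\<le>n. real ((2*n+2) choose (2*j+1)) * (-1)^j * sin phi ^ (2*j+1) * cos phi ^ (2*n+1-2*j))"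
    unfolding lessThan_Suc_atMost
  proof (rule sum.cong[OF refl])
    fix j assume "j \<in> {..n}"
    have "g (2*j) = 0"
      unfolding g_def by (simp only: Im_i_pow_even Im_complex_of_real mult_zero_right)
    moreover have "g (2*j+1) = real (N choose (2*j+1)) * ((-1)^j * s^(2*j+1) * c^(N-(2*j+1)))"
      unfolding g_def by (simp only: Im_i_pow_odd)
    moreover have "N-(2*j+1) = 2*n+1-2*j" unfolding N_def by simp
    ultimately show "g (2*j) + g (2*j+1) = real ((2*n+2) choose (2*j+1)) * (-1)^j * sin phi ^ (2*j+1) * cos phi ^ (2*n+1-2*j)"
      unfolding s_def c_def by (simp only: add_0 mult.assoc N_def)
  qed
  finally show ?thesis by (simp only: N_def)
qed

lemma coef_match:
  assumes "j \<le> n"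
  shows "2 * (((real n + 1/2) gchoose (n-j)) * ((real n + 1/2) gchoose j))
     = ((real n + 1/2) gchoose n) / (real n + 1) * real ((2*n+2) choose (2*j+1))"
proof -
  have b: "real ((2*n+2) choose (2*j+1)) = fact (2*n+2) / (fact (2*j+1) * fact (2*n+2-(2*j+1)))"
    using assms by (intro binomial_fact) simp
  have e: "2*n+2-(2*j+1) = 2*n+1-2*j" by simp
  have f: "fact (2*n+2) = (2*real n+2) * (fact (2*n+1) :: real)"
  proof -
    have "2*n+2 = Suc (2*n+1)" by simp
    then have "fact (2*n+2) = real (Suc (2*n+1)) * (fact (2*n+1) :: real)" by (simp only: fact_Suc)
    then show ?thesis by simp
  qed
  have gen: "2 * (B * (F / (F1 * F2))) = B / (real n + 1) * ((2*real n+2) * F / (F1 * F2))"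
    if "F1 > 0" "F2 > 0" for B F F1 F2 :: real
  proof -
    have n1: "real n + 1 \<noteq> 0" by simp
    have h: "(2*real n+2) * F / (F1 * F2) = (real n + 1) * (2 * (F / (F1 * F2)))" by (simp add: algebra_simps)
    show ?thesis unfolding h using n1 by simp
  qed
  show ?thesis unfolding Acoef[OF assms] b e f
    by (rule gen) auto
qed

lemma Qform:
  fixes theta :: real
  shows "jacobiP n (1/2) (1/2) (cos theta) * sin theta
     = ((real n + 1/2) gchoose n) / (real n + 1) * sin ((real n + 1) * theta)"
proof -
  define phi where "phi = theta / 2"
  define s where "s = sin phi"
  define c where "c = cos phi"
  have th: "theta = 2 * phi" unfolding phi_def by simp
  have sc: "s^2 + c^2 = 1" unfolding s_def c_def by simp
  have cm: "(cos theta - 1) / 2 = - (s^2)" unfolding th cos_double s_def c_def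
    using sin_cos_squared_add[of phi] by (simp add: algebra_simps)
  have cp: "(cos theta + 1) / 2 = c^2" unfolding th cos_double s_def c_def
    using sin_cos_squared_add[of phi] by (simp add: algebra_simps)
  have st: "sin theta = 2 * s * c" unfolding th sin_double s_def c_def by simp
  have ang: "(real n + 1) * theta = real (2*n+2) * phi" unfolding th by (simp add: algebra_simps)
  define B where "B = (real n + 1/2) gchoose n"
  have "jacobiP n (1/2) (1/2) (cos theta) * sin theta
     = (\<Sum>j\<le>n. ((real n + 1/2) gchoose (n-j)) * ((real n + 1/2) gchoose j) * (- (s^2))^j * (c^2)^(n-j)) * (2 * s * c)"
    unfolding jacobiP_def cm cp st ..
  also have "\<dots> = (\<Sum>j\<le>n. (2 * (((real n + 1/2) gchoose (n-j)) * ((real n + 1/2) gchoose j))) * (-1)^j * s^(2*j+1) * c^(2*n+1-2*j))"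
    unfolding sum_distrib_right
  proof (rule sum.cong[OF refl])
    fix j assume j: "j \<in> {..n}"
    have "(- (s^2))^j = (-1)^j * s^(2*j)" by (simp add: power_mult power_minus[of "s^2"])
    moreover have "c^(2*n+1-2*j) = (c^2)^(n-j) * c"
    proof -
      have "2*n+1-2*j = Suc (2*(n-j))" using j by auto
      then show ?thesis by (simp only: power_Suc2 power_mult)
    qed
    ultimately show "((real n + 1/2) gchoose (n-j)) * ((real n + 1/2) gchoose j) * (- (s^2))^j * (c^2)^(n-j) * (2 * s * c)
      = (2 * (((real n + 1/2) gchoose (n-j)) * ((real n + 1/2) gchoose j))) * (-1)^j * s^(2*j+1) * c^(2*n+1-2*j)"
      by (simp add: algebra_simps)
  qed
  also have "\<dots> = (\<Sum>j\<le>n. (B / (real n + 1) * real ((2*n+2) choose (2*j+1))) * (-1)^j * s^(2*j+1) * c^(2*n+1-2*j))"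
    unfolding B_def by (intro sum.cong refl) (simp only: coef_match atMost_iff)
  also have "\<dots> = B / (real n + 1) * sin (real (2*n+2) * phi)"
    unfolding sin_expand sum_distrib_left s_def c_def by (simp add: mult.assoc)
  finally show ?thesis unfolding ang B_def .
qed


lemma term_deriv:
  "((\<lambda>x::real. C * ((x-1)/2)^s * ((x+1)/2)^k) has_real_derivative
     C * (real s * ((x-1)/2)^(s-1) * ((x+1)/2)^k + real k * ((x-1)/2)^s * ((x+1)/2)^(k-1)) / 2) (at x)"
  by (rule derivative_eq_intros refl | simp)+ (simp add: algebra_simps)

lemma jacobi_deriv:
  "((\<lambda>x. jacobiP (Suc n) (1/2) (1/2) x) has_real_derivative ((real n + 3)/2 * jacobiP n (3/2) (3/2) x)) (at x)"
proof -
  define M where "M = real n + 3/2"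
  define u where "u = (x-1)/2"
  define v where "v = (x+1)/2"
  define c where "c s = (M gchoose (Suc n - s)) * (M gchoose s)" for s
  define d where "d s = (M gchoose (n - s)) * (M gchoose s)" for s
  have MM: "real (Suc n) + 1/2 = M" "real n + 3/2 = M" unfolding M_def by auto
  have J1: "jacobiP (Suc n) (1/2) (1/2) = (\<lambda>x. \<Sum>s\<le>Suc n. c s * ((x-1)/2)^s * ((x+1)/2)^(Suc n - s))"
    unfolding jacobiP_def c_def MM by simp
  have J0: "jacobiP n (3/2) (3/2) x = (\<Sum>s\<le>n. d s * u^s * v^(n - s))"
    unfolding jacobiP_def d_def MM u_def v_def by simp
  have D: "((\<lambda>x. jacobiP (Suc n) (1/2) (1/2) x) has_real_derivative
     (\<Sum>s\<le>Suc n. c s * (real s * u^(s-1) * v^(Suc n - s) + real (Suc n - s) * u^s * v^(Suc n - s - 1)) / 2)) (at x)"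
    unfolding J1 u_def v_def by (rule DERIV_sum) (rule term_deriv)
  have S1: "(\<Sum>s\<le>Suc n. c s * (real s * u^(s-1) * v^(Suc n - s)))
      = (\<Sum>s\<le>n. c (Suc s) * real (Suc s) * u^s * v^(n - s))"
    unfolding sum.atMost_Suc_shift by (simp add: mult.assoc)
  have S2: "(\<Sum>s\<le>Suc n. c s * (real (Suc n - s) * u^s * v^(Suc n - s - 1)))
      = (\<Sum>s\<le>n. c s * real (Suc n - s) * u^s * v^(n - s))"
    unfolding sum.atMost_Suc
  proof -
    have "(\<Sum>s\<le>n. c s * (real (Suc n - s) * u^s * v^(Suc n - s - 1))) = (\<Sum>s\<le>n. c s * real (Suc n - s) * u^s * v^(n - s))"
      by (intro sum.cong refl) (simp add: mult.assoc)
    then show "(\<Sum>s\<le>n. c s * (real (Suc n - s) * u^s * v^(Suc n - s - 1))) + c (Suc n) * (real (Suc n - Suc n) * u ^ Suc n * v ^ (Suc n - Suc n - 1))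
      = (\<Sum>s\<le>n. c s * real (Suc n - s) * u^s * v^(n - s))" by simp
  qed
  have coef: "c (Suc s) * real (Suc s) + c s * real (Suc n - s) = (real n + 3) * d s" if "s \<le> n" for s
  proof -
    have "c (Suc s) * real (Suc s) = (M gchoose (n-s)) * (real (Suc s) * (M gchoose Suc s))"
      unfolding c_def by simp
    also have "\<dots> = (M gchoose (n-s)) * ((M - real s) * (M gchoose s))" by (simp only: gch_step)
    also have "\<dots> = (M - real s) * d s" unfolding d_def by (simp only: mult_ac)
    finally have a: "c (Suc s) * real (Suc s) = (M - real s) * d s" .
    have b0: "Suc n - s = Suc (n - s)" using that by simp
    have "c s * real (Suc n - s) = (M gchoose s) * (real (Suc (n-s)) * (M gchoose Suc (n-s)))"
      unfolding c_def b0 by (simp only: mult_ac)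
    also have "\<dots> = (M gchoose s) * ((M - real (n-s)) * (M gchoose (n-s)))" by (simp only: gch_step)
    also have "\<dots> = (M - real (n-s)) * d s" unfolding d_def by (simp only: mult_ac)
    finally have b: "c s * real (Suc n - s) = (M - real (n - s)) * d s" .
    show ?thesis unfolding a b using that unfolding M_def by (simp add: algebra_simps of_nat_diff)
  qed
  have "(\<Sum>s\<le>Suc n. c s * (real s * u^(s-1) * v^(Suc n - s) + real (Suc n - s) * u^s * v^(Suc n - s - 1)) / 2)
      = ((\<Sum>s\<le>Suc n. c s * (real s * u^(s-1) * v^(Suc n - s))) + (\<Sum>s\<le>Suc n. c s * (real (Suc n - s) * u^s * v^(Suc n - s - 1)))) / 2"
    by (simp only: distrib_left sum_divide_distrib[symmetric] sum.distrib)
  also have "\<dots> = (\<Sum>s\<le>n. (c (Suc s) * real (Suc s) + c s * real (Suc n - s)) * u^s * v^(n - s)) / 2"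
    unfolding S1 S2 sum.distrib[symmetric] by (simp add: algebra_simps)
  also have "\<dots> = (\<Sum>s\<le>n. ((real n + 3) * d s) * u^s * v^(n - s)) / 2"
    by (intro arg_cong[where f="\<lambda>t. t / 2"] sum.cong refl) (simp only: coef atMost_iff)
  also have "\<dots> = (real n + 3)/2 * jacobiP n (3/2) (3/2) x"
    unfolding J0 sum_distrib_left by (simp add: sum_divide_distrib mult.assoc)
  finally have calc: "(\<Sum>s\<le>Suc n. c s * (real s * u^(s-1) * v^(Suc n - s) + real (Suc n - s) * u^s * v^(Suc n - s - 1)) / 2) = (real n + 3)/2 * jacobiP n (3/2) (3/2) x" .
  from D show ?thesis unfolding calc .
qed


lemma Gamma_plus1_pos: "(z::real) > 0 \<Longrightarrow> Gamma (z + 1) = z * Gamma z"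
  by (rule Gamma_plus1) (auto elim!: nonpos_Ints_cases)

lemma gch_gamma: "((real n + 3/2) gchoose (Suc n)) * fact (Suc n) * Gamma (3/2) = Gamma (real n + 5/2)"
proof (induction n)
  case 0
  have "Gamma (5/2::real) = Gamma (3/2 + 1)" by simp
  also have "\<dots> = 3/2 * Gamma (3/2)" by (rule Gamma_plus1_pos) simp
  finally show ?case by simp
next
  case (Suc n)
  have r: "((real n + 3/2) + 1) gchoose Suc (Suc n) = ((real n + 3/2) gchoose Suc n) * (((real n + 3/2) + 1) / of_nat (Suc (Suc n)))"
    by (rule gbinomial_rec)
  have g: "Gamma ((real n + 5/2) + 1) = (real n + 5/2) * Gamma (real n + 5/2)" by (rule Gamma_plus1_pos) simp
  have e1: "real (Suc n) + 3/2 = (real n + 3/2) + 1" by simp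
  have e2: "real (Suc n) + 5/2 = (real n + 5/2) + 1" by simp
  show ?case unfolding e1 e2 r g Suc.IH[symmetric] by (simp add: field_simps)
qed

lemma Gamma_three_halves: "Gamma (3/2::real) = sqrt pi / 2"
proof -
  have "Gamma (3/2::real) = Gamma (1/2 + 1)" by simp
  also have "\<dots> = 1/2 * Gamma (1/2)" by (rule Gamma_plus1_pos) simp
  finally show ?thesis by (simp add: Gamma_one_half_real)
qed

lemma gch_pos: "((real n + 3/2) gchoose (Suc n)) > 0"
proof -
  have "((real n + 3/2) gchoose (Suc n)) * (fact (Suc n) * Gamma (3/2)) > 0"
    using gch_gamma[of n] by (simp add: mult.assoc)
  moreover have "fact (Suc n) * Gamma (3/2::real) > 0" by (simp add: Gamma_three_halves)
  ultimately show ?thesis by (rule zero_less_mult_pos2)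
qed

definition kQ :: "nat \<Rightarrow> real" where
  "kQ n = ((real n + 1/2) gchoose n) / (real n + 1)"

lemma Qform': "jacobiP n (1/2) (1/2) (cos t) * sin t = kQ n * sin ((real n + 1) * t)"
  unfolding kQ_def by (rule Qform)

lemma Rform:
  fixes t :: real
  shows "sin t ^ 3 * jacobiP n (3/2) (3/2) (cos t)
    = 2 * kQ (Suc n) / (real n + 3) * (cos t * sin ((real n + 2) * t) - (real n + 2) * sin t * cos ((real n + 2) * t))"
proof -
  define Q where "Q = jacobiP (Suc n) (1/2) (1/2)"
  define R where "R = jacobiP n (3/2) (3/2)"
  define k where "k = kQ (Suc n)"
  have a: "real (Suc n) + 1 = real n + 2" by simp
  have eqf: "(\<lambda>t. Q (cos t) * sin t) = (\<lambda>t. k * sin ((real n + 2) * t))"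
    using Qform'[of "Suc n"] unfolding Q_def k_def a by auto
  have d1: "((\<lambda>t. Q (cos t) * sin t) has_real_derivative
      ((real n + 3)/2 * R (cos t) * (- sin t)) * sin t + Q (cos t) * cos t) (at t)"
  proof -
    have "((\<lambda>t. Q (cos t)) has_real_derivative (real n + 3)/2 * R (cos t) * (- sin t)) (at t)"
      using DERIV_chain2[OF jacobi_deriv[of n "cos t", folded Q_def R_def] DERIV_cos[of t]] by simp
    then show ?thesis by (rule DERIV_mult[OF _ DERIV_sin, THEN DERIV_cong]) simp
  qed
  have d2: "((\<lambda>t. k * sin ((real n + 2) * t)) has_real_derivative k * (cos ((real n + 2) * t) * (real n + 2))) (at t)"
    by (rule derivative_eq_intros refl | simp)+
  have eqd: "((real n + 3)/2 * R (cos t) * (- sin t)) * sin t + Q (cos t) * cos t = k * (cos ((real n + 2) * t) * (real n + 2))"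
    using DERIV_unique[OF d1 d2[folded eqf]] .
  have qt: "Q (cos t) * sin t = k * sin ((real n + 2) * t)" using eqf by meson
  define X where "X = sin t ^ 3 * R (cos t)"
  have "2 * sin t * (((real n + 3)/2 * R (cos t) * (- sin t)) * sin t + Q (cos t) * cos t) = 2 * sin t * (k * (cos ((real n + 2) * t) * (real n + 2)))"
    using eqd by simp
  then have "-(real n + 3) * X + 2 * (Q (cos t) * sin t) * cos t = 2 * k * (real n + 2) * sin t * cos ((real n + 2) * t)"
    unfolding X_def by (simp add: field_simps power3_eq_cube)
  then have "-(real n + 3) * X + 2 * (k * sin ((real n + 2) * t)) * cos t = 2 * k * (real n + 2) * sin t * cos ((real n + 2) * t)"
    unfolding qt .
  then have "(real n + 3) * X = 2 * k * (cos t * sin ((real n + 2) * t) - (real n + 2) * sin t * cos ((real n + 2) * t))"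
    by (simp add: algebra_simps)
  then show ?thesis unfolding R_def k_def[symmetric] X_def
    by (simp add: field_simps add_pos_pos)
qed


definition rho :: "nat \<Rightarrow> real" where
  "rho n = 4 * kQ (Suc n) / (real n + 3)"

lemma rho_pos: "rho n > 0"
proof -
  have e: "real (Suc n) + 1/2 = real n + 3/2" by simp
  have "kQ (Suc n) > 0" unfolding kQ_def e by (intro divide_pos_pos gch_pos) simp
  then show ?thesis unfolding rho_def by simp
qed

lemma rho_nz [simp]: "rho n \<noteq> 0" using rho_pos[of n] by simp

definition gg :: "int \<Rightarrow> real \<Rightarrow> real" where
  "gg n t = (if n < 0 then 0 else jacobiP (nat n) (3/2) (3/2) (cos t) / rho (nat n))"

definition TT :: "int \<Rightarrow> real \<Rightarrow> real" where
  "TT n t = cos t * sin ((of_int n + 2) * t) - (of_int n + 2) * sin t * cos ((of_int n + 2) * t)"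

lemma gg_closed:
  assumes "n \<ge> -1"
  shows "sin t ^ 3 * gg n t = TT n t / 2"
proof (cases "n < 0")
  case True
  then have "n = -1" using assms by simp
  then show ?thesis unfolding gg_def TT_def by (simp add: algebra_simps)
next
  case False
  define k where "k = nat n"
  have n: "n = int k" using False unfolding k_def by simp
  have "sin t ^ 3 * gg n t = (sin t ^ 3 * jacobiP k (3/2) (3/2) (cos t)) / rho k"
    unfolding gg_def n by simp
  also have "\<dots> = TT n t / 2"
  proof -
    have r: "sin t ^ 3 * jacobiP k (3/2) (3/2) (cos t) = 2 * kQ (Suc k) / (real k + 3) * TT n t"
      unfolding Rform TT_def n by simp
    have K: "kQ (Suc k) \<noteq> 0" using rho_nz[of k] unfolding rho_def by auto
    have gen: "(2 * K / c * T) / (4 * K / c) = T / 2" if "K \<noteq> 0" "c > 0" for K c T :: real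
      using that by (simp add: field_simps)
    show ?thesis unfolding r rho_def by (rule gen[OF K]) simp
  qed
  finally show ?thesis .
qed

lemma TT_rec:
  assumes "n \<ge> 0"
  shows "(of_int n + 1) * TT (n+1) t + (of_int n + 3) * TT (n-1) t = 2 * (of_int n + 2) * cos t * TT n t"
proof -
  define a where "a = (of_int n + 2) * t"
  have e1: "(of_int (n+1) + 2) * t = a + t" unfolding a_def by (simp add: algebra_simps)
  have e2: "(of_int (n-1) + 2) * t = a - t" unfolding a_def by (simp add: algebra_simps)
  have e3: "(of_int n + 2) * t = a" unfolding a_def ..
  show ?thesis unfolding TT_def e1 e2 e3 sin_add cos_add sin_diff cos_diff
    by (simp add: algebra_simps)
qed

lemma gg_rec:
  assumes "n \<ge> 0"
  shows "sin t ^ 3 * ((of_int n + 1) * gg (n+1) t + (of_int n + 3) * gg (n-1) t - 2 * (of_int n + 2) * cos t * gg n t) = 0"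
proof -
  have "sin t ^ 3 * ((of_int n + 1) * gg (n+1) t + (of_int n + 3) * gg (n-1) t - 2 * (of_int n + 2) * cos t * gg n t)
    = (of_int n + 1) * (sin t ^ 3 * gg (n+1) t) + (of_int n + 3) * (sin t ^ 3 * gg (n-1) t) - 2 * (of_int n + 2) * cos t * (sin t ^ 3 * gg n t)"
    by (simp add: algebra_simps)
  also have "\<dots> = ((of_int n + 1) * TT (n+1) t + (of_int n + 3) * TT (n-1) t - 2 * (of_int n + 2) * cos t * TT n t) / 2"
  proof -
    have h1: "sin t ^ 3 * gg (n+1) t = TT (n+1) t / 2" using assms by (intro gg_closed) simp
    have h2: "sin t ^ 3 * gg (n-1) t = TT (n-1) t / 2" using assms by (intro gg_closed) simp
    have h3: "sin t ^ 3 * gg n t = TT n t / 2" using assms by (intro gg_closed) simp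
    show ?thesis unfolding h1 h2 mult.assoc[of _ "cos t", symmetric] mult.assoc[of _ _ "gg n t"]
      using h3 by (simp add: field_simps)
  qed
  also have "\<dots> = 0" using TT_rec[OF assms, of t] by simp
  finally show ?thesis .
qed

lemma cont_jacobiP: "continuous_on S (jacobiP n a b)"
  unfolding jacobiP_def by (intro continuous_intros) auto

lemma cont_gg: "continuous_on S (gg n)"
  unfolding gg_def by (cases "n < 0") (auto intro!: continuous_intros continuous_on_compose2[OF cont_jacobiP])


lemma int_cos: "integral {0..pi} (\<lambda>t. cos (real k * t)) = (if k = 0 then pi else 0)"
proof (cases "k = 0")
  case True
  then show ?thesis by simp
next
  case False
  have "((\<lambda>t. cos (real k * t)) has_integral (sin (real k * pi) / real k - sin (real k * 0) / real k)) {0..pi}"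
  proof (rule fundamental_theorem_of_calculus)
    fix x :: real assume "x \<in> {0..pi}"
    have "((\<lambda>t. sin (real k * t) / real k) has_real_derivative cos (real k * x)) (at x)"
      using False by (auto intro!: derivative_eq_intros)
    then show "((\<lambda>t. sin (real k * t) / real k) has_vector_derivative cos (real k * x)) (at x within {0..pi})"
      unfolding has_real_derivative_iff_has_vector_derivative[symmetric] by (rule has_field_derivative_at_within)
  qed simp
  then show ?thesis using False by (simp add: integral_unique)
qed

lemma int_lin3:
  fixes f1 f2 f3 :: "real \<Rightarrow> real"
  assumes "f1 integrable_on S" "f2 integrable_on S" "f3 integrable_on S"
    and "\<And>t. t \<in> S \<Longrightarrow> a * f1 t + b * f2 t = c * f3 t"
  shows "a * integral S f1 + b * integral S f2 = c * integral S f3"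
proof -
  have "a * integral S f1 + b * integral S f2 = integral S (\<lambda>t. a * f1 t + b * f2 t)"
    using assms(1,2) by (simp add: integral_add integrable_on_mult_right)
  also have "\<dots> = integral S (\<lambda>t. c * f3 t)" using assms(4) by (intro integral_cong) auto
  also have "\<dots> = c * integral S f3" by simp
  finally show ?thesis .
qed

lemma int_lin3':
  fixes f1 f2 f3 f4 :: "real \<Rightarrow> real"
  assumes "f1 integrable_on S" "f2 integrable_on S" "f3 integrable_on S"
    and "\<And>t. t \<in> S \<Longrightarrow> f4 t = a * f1 t + b * f2 t + c * f3 t"
  shows "integral S f4 = a * integral S f1 + b * integral S f2 + c * integral S f3"
proof -
  have "integral S f4 = integral S (\<lambda>t. a * f1 t + b * f2 t + c * f3 t)" using assms(4) by (intro integral_cong) auto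
  also have "\<dots> = a * integral S f1 + b * integral S f2 + c * integral S f3"
    using assms(1-3) by (simp add: integral_add integrable_on_mult_right integrable_add)
  finally show ?thesis .
qed

definition JJ :: "int \<Rightarrow> int \<Rightarrow> int \<Rightarrow> real" where
  "JJ i j m = integral {0..pi} (\<lambda>t. gg i t * gg j t * gg m t * sin t ^ 4)"

lemma JJ_sym1: "JJ i j m = JJ j i m" unfolding JJ_def by (simp add: mult_ac)
lemma JJ_sym2: "JJ i j m = JJ i m j" unfolding JJ_def by (simp add: mult_ac)

lemma JJ_neg: "i < 0 \<Longrightarrow> JJ i j m = 0" unfolding JJ_def gg_def by simp

lemma integ: "continuous_on {0..pi} (f::real\<Rightarrow>real) \<Longrightarrow> f integrable_on {0..pi}"
  by (rule integrable_continuous_interval)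

lemma int_rec:
  assumes "n \<ge> 0" and h: "continuous_on {0..pi} h"
  shows "(of_int n + 1) * integral {0..pi} (\<lambda>t. gg (n+1) t * h t * sin t ^ 4)
       + (of_int n + 3) * integral {0..pi} (\<lambda>t. gg (n-1) t * h t * sin t ^ 4)
       = 2 * (of_int n + 2) * integral {0..pi} (\<lambda>t. cos t * gg n t * h t * sin t ^ 4)"
proof (rule int_lin3)
  show "(\<lambda>t. gg (n+1) t * h t * sin t ^ 4) integrable_on {0..pi}"
    by (intro integ continuous_intros cont_gg h)
  show "(\<lambda>t. gg (n-1) t * h t * sin t ^ 4) integrable_on {0..pi}"
    by (intro integ continuous_intros cont_gg h)
  show "(\<lambda>t. cos t * gg n t * h t * sin t ^ 4) integrable_on {0..pi}"
    by (intro integ continuous_intros cont_gg h)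
  fix t
  have "h t * sin t * (sin t ^ 3 * ((of_int n + 1) * gg (n+1) t + (of_int n + 3) * gg (n-1) t - 2 * (of_int n + 2) * cos t * gg n t)) = 0"
    using gg_rec[OF assms(1), of t] by simp
  then show "(of_int n + 1) * (gg (n+1) t * h t * sin t ^ 4) + (of_int n + 3) * (gg (n-1) t * h t * sin t ^ 4)
      = 2 * (of_int n + 2) * (cos t * gg n t * h t * sin t ^ 4)"
    by (simp add: algebra_simps power_Suc power3_eq_cube power4_eq_xxxx)
qed

lemma JJ_rec:
  assumes "a \<ge> 0" "b \<ge> 0"
  shows "(of_int a + 1) * JJ (a+1) b c + (of_int a + 3) * JJ (a-1) b c
       = (of_int a + 2) / (of_int b + 2) * ((of_int b + 1) * JJ a (b+1) c + (of_int b + 3) * JJ a (b-1) c)"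
proof -
  define W where "W = integral {0..pi} (\<lambda>t. cos t * gg a t * gg b t * gg c t * sin t ^ 4)"
  have r1: "(of_int a + 1) * JJ (a+1) b c + (of_int a + 3) * JJ (a-1) b c = 2 * (of_int a + 2) * W"
    using int_rec[OF assms(1), of "\<lambda>t. gg b t * gg c t"] unfolding JJ_def W_def
    by (simp add: mult_ac cont_gg continuous_intros)
  have r2: "(of_int b + 1) * JJ a (b+1) c + (of_int b + 3) * JJ a (b-1) c = 2 * (of_int b + 2) * W"
    using int_rec[OF assms(2), of "\<lambda>t. gg a t * gg c t"] unfolding JJ_def W_def
    by (simp add: mult_ac cont_gg continuous_intros)
  have "of_int b + 2 > (0::real)" using assms by simp
  then show ?thesis unfolding r1 r2 by (simp add: field_simps)
qed

lemma gg0: "gg 0 t = 1"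
  unfolding gg_def rho_def kQ_def jacobiP_def by simp

lemma int_sinTT:
  assumes "m \<ge> 0"
  shows "integral {0..pi} (\<lambda>t. sin t * TT m t) = (if m = 0 then 3 * pi / 4 else 0)"
proof -
  define k where "k = nat m"
  have mk: "m = int k" using assms unfolding k_def by simp
  have pw: "sin t * TT m t = (real k + 3)/4 * cos (real k * t) + (- (real k + 2)/2) * cos (real (k+2) * t) + (real k + 1)/4 * cos (real (k+4) * t)" for t
  proof -
    define a where "a = (real k + 2) * t"
    have e0: "real k * t = a - 2 * t" unfolding a_def by (simp add: algebra_simps)
    have e2: "real (k+2) * t = a" unfolding a_def by (simp add: algebra_simps)
    have e4: "real (k+4) * t = a + 2 * t" unfolding a_def by (simp add: algebra_simps)
    have ea: "(of_int m + 2) * t = a" unfolding a_def mk by simp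
    have mr: "(of_int m :: real) = real k" using mk by simp
    have ea2: "(real k + 2) * t = a" unfolding a_def ..
    show ?thesis unfolding TT_def e0 e2 e4 ea mr ea2 cos_add cos_diff sin_double cos_double_sin
      by (simp add: field_simps power2_eq_square)
  qed
  have "integral {0..pi} (\<lambda>t. sin t * TT m t)
      = (real k + 3)/4 * integral {0..pi} (\<lambda>t. cos (real k * t)) + (- (real k + 2)/2) * integral {0..pi} (\<lambda>t. cos (real (k+2) * t))
        + (real k + 1)/4 * integral {0..pi} (\<lambda>t. cos (real (k+4) * t))"
    by (rule int_lin3'[OF integ integ integ pw]) (auto intro!: continuous_intros)
  also have "\<dots> = (if m = 0 then 3 * pi / 4 else 0)"
    unfolding int_cos mk by simp
  finally show ?thesis .
qed

lemma JJ_base: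
  assumes "m \<ge> 0"
  shows "JJ 0 0 m = (if m = 0 then 3 * pi / 8 else 0)"
proof -
  have "JJ 0 0 m = integral {0..pi} (\<lambda>t. (sin t * TT m t) / 2)"
    unfolding JJ_def gg0
  proof (intro integral_cong)
    fix t
    have "sin t ^ 3 * gg m t = TT m t / 2" using assms by (intro gg_closed) simp
    then show "1 * 1 * gg m t * sin t ^ 4 = sin t * TT m t / 2"
      by (simp add: power4_eq_xxxx power3_eq_cube algebra_simps)
  qed
  also have "\<dots> = integral {0..pi} (\<lambda>t. sin t * TT m t) / 2" by simp
  also have "\<dots> = (if m = 0 then 3 * pi / 8 else 0)" unfolding int_sinTT[OF assms] by simp
  finally show ?thesis .
qed


definition PP :: "int \<Rightarrow> int \<Rightarrow> int \<Rightarrow> int" where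
  "PP i j m = (i+j-m+2)*(i-j+m+2)*(-i+j+m+2)*(i+j+m+6)"

definition FF :: "int \<Rightarrow> int \<Rightarrow> int \<Rightarrow> real" where
  "FF i j m = (if 0 \<le> j+m-i \<and> 0 \<le> i+m-j \<and> 0 \<le> i+j-m \<and> even (i+j+m) then pi/128 * of_int (PP i j m) else 0)"

lemma PP_sym1: "PP i j m = PP j i m" unfolding PP_def by (simp add: algebra_simps)
lemma PP_sym2: "PP i j m = PP i m j" unfolding PP_def by (simp add: algebra_simps)

lemma FF_sym1: "FF i j m = FF j i m"
proof -
  have "(0 \<le> j+m-i \<and> 0 \<le> i+m-j \<and> 0 \<le> i+j-m \<and> even (i+j+m)) = (0 \<le> i+m-j \<and> 0 \<le> j+m-i \<and> 0 \<le> j+i-m \<and> even (j+i+m))"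
    by (auto simp: algebra_simps)
  then show ?thesis unfolding FF_def PP_sym1[of i j m] by simp
qed

lemma FF_sym2: "FF i j m = FF i m j"
proof -
  have "(0 \<le> j+m-i \<and> 0 \<le> i+m-j \<and> 0 \<le> i+j-m \<and> even (i+j+m)) = (0 \<le> m+j-i \<and> 0 \<le> i+j-m \<and> 0 \<le> i+m-j \<and> even (i+m+j))"
    by (auto simp: algebra_simps)
  then show ?thesis unfolding FF_def PP_sym2[of i j m] by simp
qed

lemma FF_neg: "j+m-i < 0 \<or> i+m-j < 0 \<or> i+j-m < 0 \<or> odd (i+j+m) \<Longrightarrow> FF i j m = 0"
  unfolding FF_def by auto

lemma FF_poly:
  assumes "even (i+j+m)" "j+m-i \<ge> -2" "i+m-j \<ge> -2" "i+j-m \<ge> -2"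
  shows "FF i j m = pi/128 * of_int (PP i j m)"
proof (cases "0 \<le> j+m-i \<and> 0 \<le> i+m-j \<and> 0 \<le> i+j-m")
  case True
  then show ?thesis unfolding FF_def using assms by simp
next
  case False
  have ev: "even (j+m-i)" "even (i+m-j)" "even (i+j-m)" using assms(1) by presburger+
  from False have "j+m-i = -2 \<or> i+m-j = -2 \<or> i+j-m = -2"
    using assms ev by presburger
  then have "PP i j m = 0" unfolding PP_def by (auto simp: algebra_simps)
  then show ?thesis unfolding FF_def using False by simp
qed

lemma PP_rec:
  "(b+2)*((a+1)*PP (a+1) b c + (a+3)*PP (a-1) b c) = (a+2)*((b+1)*PP a (b+1) c + (b+3)*PP a (b-1) c)"
  unfolding PP_def by (simp add: algebra_simps)

lemma FF_rec:
  assumes "a \<ge> 0" "b \<ge> 0"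
  shows "(of_int a + 1) * FF (a+1) b c + (of_int a + 3) * FF (a-1) b c
       = (of_int a + 2) / (of_int b + 2) * ((of_int b + 1) * FF a (b+1) c + (of_int b + 3) * FF a (b-1) c)"
proof (cases "even (a+b+c)")
  case True
  then have "odd (a+1+b+c)" "odd (a-1+b+c)" "odd (a+(b+1)+c)" "odd (a+(b-1)+c)" by presburger+
  then show ?thesis by (simp add: FF_neg)
next
  case odd: False
  show ?thesis
  proof (cases "b+c-a \<ge> -1 \<and> a+c-b \<ge> -1 \<and> a+b-c \<ge> -1")
    case True
    have p1: "FF (a+1) b c = pi/128 * of_int (PP (a+1) b c)" using True odd by (intro FF_poly) presburger+
    have p2: "FF (a-1) b c = pi/128 * of_int (PP (a-1) b c)" using True odd by (intro FF_poly) presburger+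
    have p3: "FF a (b+1) c = pi/128 * of_int (PP a (b+1) c)" using True odd by (intro FF_poly) presburger+
    have p4: "FF a (b-1) c = pi/128 * of_int (PP a (b-1) c)" using True odd by (intro FF_poly) presburger+
    have r: "(of_int b + 2) * ((of_int a + 1) * of_int (PP (a+1) b c) + (of_int a + 3) * of_int (PP (a-1) b c))
        = (of_int a + 2) * ((of_int b + 1) * of_int (PP a (b+1) c) + (of_int b + 3) * of_int (PP a (b-1) c) :: real)"
      using arg_cong[OF PP_rec[of b a c], of real_of_int] by simp
    have bp: "(of_int b + 2 :: real) > 0" using assms by simp
    have gen: "k * L = A / B * (k * R)" if "B > 0" "B * L = A * R" for k L A B R :: real
    proof -
      have "L = A * R / B" using that by (simp add: field_simps)
      then show ?thesis by simp
    qed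
    define k where "k = pi / 128"
    show ?thesis unfolding p1 p2 p3 p4 k_def[symmetric]
    proof -
      have "(of_int a + 1) * (k * of_int (PP (a+1) b c)) + (of_int a + 3) * (k * of_int (PP (a-1) b c))
         = k * ((of_int a + 1) * of_int (PP (a+1) b c) + (of_int a + 3) * of_int (PP (a-1) b c))"
        by (simp add: algebra_simps)
      also have "\<dots> = (of_int a + 2) / (of_int b + 2) * (k * ((of_int b + 1) * of_int (PP a (b+1) c) + (of_int b + 3) * of_int (PP a (b-1) c)))"
        by (rule gen[OF bp r])
      also have "\<dots> = (of_int a + 2) / (of_int b + 2) * ((of_int b + 1) * (k * of_int (PP a (b+1) c)) + (of_int b + 3) * (k * of_int (PP a (b-1) c)))"
        by (simp add: algebra_simps)
      finally show "(of_int a + 1) * (k * of_int (PP (a+1) b c)) + (of_int a + 3) * (k * of_int (PP (a-1) b c))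
         = (of_int a + 2) / (of_int b + 2) * ((of_int b + 1) * (k * of_int (PP a (b+1) c)) + (of_int b + 3) * (k * of_int (PP a (b-1) c)))" .
    qed
  next
    case False
    then have "b+c-a \<le> -3 \<or> a+c-b \<le> -3 \<or> a+b-c \<le> -3" using odd by presburger
    then show ?thesis by (auto simp: FF_neg)
  qed
qed


lemma cancel_rec:
  fixes x y p q :: real
  assumes "c1 * x + p = q" "c1 * y + p = q" "c1 \<noteq> 0"
  shows "x = y"
  using assms by (metis add_right_cancel mult_cancel_left)

lemma JK: "\<forall>m\<ge>-1. JJ (int k - 1) m 0 = FF (int k - 1) m 0 \<and> JJ (int (Suc k) - 1) m 0 = FF (int (Suc k) - 1) m 0"
proof (induction k)
  case 0
  have A: "JJ (-1) m 0 = FF (-1) m 0" for m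
  proof -
    have "FF (-1) m 0 = 0" by (rule FF_neg) arith
    then show ?thesis by (simp add: JJ_neg)
  qed
  have B: "JJ 0 m 0 = FF 0 m 0" if "m \<ge> -1" for m
  proof (cases "m < 0")
    case True
    then show ?thesis using JJ_neg[of m 0 0] JJ_sym1[of 0 m 0] by (simp add: FF_neg)
  next
    case False
    have "JJ 0 m 0 = JJ 0 0 m" by (rule JJ_sym2)
    also have "\<dots> = (if m = 0 then 3 * pi / 8 else 0)" using False by (intro JJ_base) simp
    also have "\<dots> = FF 0 m 0" using False unfolding FF_def PP_def by auto
    finally show ?thesis .
  qed
  show ?case using A B by simp
next
  case (Suc k)
  show ?case
  proof (intro allI impI conjI)
    fix m :: int assume m: "m \<ge> -1"
    show "JJ (int (Suc k) - 1) m 0 = FF (int (Suc k) - 1) m 0" using Suc.IH m by blast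
    define a where "a = int k"
    have ea: "int (Suc (Suc k)) - 1 = a + 1" "int (Suc k) - 1 = a" "int k - 1 = a - 1" unfolding a_def by auto
    show "JJ (int (Suc (Suc k)) - 1) m 0 = FF (int (Suc (Suc k)) - 1) m 0"
    proof (cases "m < 0")
      case True
      have "FF (a+1) m 0 = 0" using True unfolding a_def by (intro FF_neg) arith
      then show ?thesis unfolding ea using True JJ_neg[of m "a+1" 0] JJ_sym1[of "a+1" m 0]
        by simp
    next
      case False
      have IH1: "JJ (a-1) m 0 = FF (a-1) m 0" using Suc.IH m unfolding ea by blast
      have IH2: "JJ a (m+1) 0 = FF a (m+1) 0" "JJ a (m-1) 0 = FF a (m-1) 0"
        using Suc.IH m False unfolding ea by auto
      have a0: "a \<ge> 0" unfolding a_def by simp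
      have m0: "m \<ge> 0" using False by simp
      have rJ: "(of_int a + 1) * JJ (a+1) m 0 + (of_int a + 3) * FF (a-1) m 0
          = (of_int a + 2) / (of_int m + 2) * ((of_int m + 1) * FF a (m+1) 0 + (of_int m + 3) * FF a (m-1) 0)"
        using JJ_rec[OF a0 m0, of 0] unfolding IH1 IH2 .
      have rF: "(of_int a + 1) * FF (a+1) m 0 + (of_int a + 3) * FF (a-1) m 0
          = (of_int a + 2) / (of_int m + 2) * ((of_int m + 1) * FF a (m+1) 0 + (of_int m + 3) * FF a (m-1) 0)"
        by (rule FF_rec[OF a0 m0])
      have "(of_int a + 1 :: real) \<noteq> 0" using a0 by simp
      then show ?thesis unfolding ea by (rule cancel_rec[OF rJ rF])
    qed
  qed
qed

lemma JJ0: "j \<ge> -1 \<Longrightarrow> m \<ge> -1 \<Longrightarrow> JJ j m 0 = FF j m 0"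
proof -
  assume j: "j \<ge> -1" and m: "m \<ge> -1"
  define k where "k = nat (j + 1)"
  have "j = int k - 1" unfolding k_def using j by simp
  then show ?thesis using JK[of k] m by blast
qed

lemma JM: "\<forall>j\<ge>-1. \<forall>m\<ge>-1. JJ (int k - 1) j m = FF (int k - 1) j m \<and> JJ (int (Suc k) - 1) j m = FF (int (Suc k) - 1) j m"
proof (induction k)
  case 0
  have A: "JJ (-1) j m = FF (-1) j m" if "j \<ge> -1" "m \<ge> -1" for j m
  proof -
    have "FF (-1) j m = 0" by (rule FF_neg) arith
    then show ?thesis by (simp add: JJ_neg)
  qed
  have B: "JJ 0 j m = FF 0 j m" if "j \<ge> -1" "m \<ge> -1" for j m
  proof -
    have "JJ 0 j m = JJ j m 0" using JJ_sym1[of 0 j m] JJ_sym2[of j 0 m] by simp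
    also have "\<dots> = FF j m 0" using that by (rule JJ0)
    also have "\<dots> = FF 0 j m" using FF_sym1[of 0 j m] FF_sym2[of j 0 m] by simp
    finally show ?thesis .
  qed
  show ?case using A B by simp
next
  case (Suc k)
  show ?case
  proof (intro allI impI conjI)
    fix j m :: int assume j: "j \<ge> -1" and m: "m \<ge> -1"
    show "JJ (int (Suc k) - 1) j m = FF (int (Suc k) - 1) j m" using Suc.IH j m by blast
    define a where "a = int k"
    have ea: "int (Suc (Suc k)) - 1 = a + 1" "int (Suc k) - 1 = a" "int k - 1 = a - 1" unfolding a_def by auto
    show "JJ (int (Suc (Suc k)) - 1) j m = FF (int (Suc (Suc k)) - 1) j m"
    proof (cases "j < 0")
      case True
      have "FF (a+1) j m = 0" using True j m unfolding a_def by (intro FF_neg) arith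
      then show ?thesis unfolding ea using True JJ_neg[of j "a+1" m] JJ_sym1[of "a+1" j m]
        by simp
    next
      case False
      have IH1: "JJ (a-1) j m = FF (a-1) j m" using Suc.IH j m unfolding ea by blast
      have IH2: "JJ a (j+1) m = FF a (j+1) m" "JJ a (j-1) m = FF a (j-1) m"
        using Suc.IH m False unfolding ea by auto
      have a0: "a \<ge> 0" unfolding a_def by simp
      have j0: "j \<ge> 0" using False by simp
      have rJ: "(of_int a + 1) * JJ (a+1) j m + (of_int a + 3) * FF (a-1) j m
          = (of_int a + 2) / (of_int j + 2) * ((of_int j + 1) * FF a (j+1) m + (of_int j + 3) * FF a (j-1) m)"
        using JJ_rec[OF a0 j0, of m] unfolding IH1 IH2 .
      have rF: "(of_int a + 1) * FF (a+1) j m + (of_int a + 3) * FF (a-1) j m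
          = (of_int a + 2) / (of_int j + 2) * ((of_int j + 1) * FF a (j+1) m + (of_int j + 3) * FF a (j-1) m)"
        by (rule FF_rec[OF a0 j0])
      have "(of_int a + 1 :: real) \<noteq> 0" using a0 by simp
      then show ?thesis unfolding ea by (rule cancel_rec[OF rJ rF])
    qed
  qed
qed

lemma JJ_FF: "i \<ge> -1 \<Longrightarrow> j \<ge> -1 \<Longrightarrow> m \<ge> -1 \<Longrightarrow> JJ i j m = FF i j m"
proof -
  assume i: "i \<ge> -1" and j: "j \<ge> -1" and m: "m \<ge> -1"
  define k where "k = nat (i + 1)"
  have "i = int k - 1" unfolding k_def using i by simp
  then show ?thesis using JM[of k] j m by blast
qed


lemma NR: "normN n * rho n = 4 / sqrt (2 * pi * (real n + 1) * (real n + 3))"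
proof -
  define F where "F = (fact n :: real)"
  define s where "s = sqrt ((real n + 1) * (real n + 3))"
  define Gm where "Gm = Gamma (real n + 5/2)"
  define G where "G = (real n + 3/2) gchoose (Suc n)"
  have Fp: "F > 0" unfolding F_def by simp
  have sp: "s > 0" unfolding s_def by simp
  have Gmp: "Gm > 0" unfolding Gm_def by simp
  have ss: "s * s = (real n + 1) * (real n + 3)" unfolding s_def by simp
  have g1: "Gamma (1 + real n) = F" unfolding F_def using Gamma_fact[of n] by simp
  have g4: "Gamma (4 + real n) = F * (real n + 1) * (real n + 2) * (real n + 3)"
  proof -
    have "Gamma (4 + real n) = Gamma (1 + real (n+3))" by simp
    also have "\<dots> = fact (n+3)" by (rule Gamma_fact)
    also have "\<dots> = F * (real n + 1) * (real n + 2) * (real n + 3)"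
      unfolding F_def by (simp add: fact_Suc numeral_3_eq_3 algebra_simps)
    finally show ?thesis .
  qed
  have g5: "Gamma (5/2 + real n) = Gm" unfolding Gm_def by (simp add: add.commute)
  have GG: "G * (F * (real n + 1)) * (sqrt pi / 2) = Gm"
    using gch_gamma[of n] unfolding G_def F_def Gm_def Gamma_three_halves by (simp add: algebra_simps)
  have sq: "sqrt (omega_n n * Gamma (1 + real n) * Gamma (4 + real n)) = F * (real n + 2) * s"
  proof -
    have "omega_n n * Gamma (1 + real n) * Gamma (4 + real n) = (F * (real n + 2))^2 * ((real n + 1) * (real n + 3))"
      unfolding omega_n_def g1 g4 by (simp add: power2_eq_square algebra_simps)
    then show ?thesis unfolding s_def using Fp by (simp add: real_sqrt_mult)
  qed
  have kq: "kQ (Suc n) = G / (real n + 2)"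
  proof -
    have e1: "real (Suc n) + 1/2 = real n + 3/2" and e2: "real (Suc n) + 1 = real n + 2" by simp_all
    show ?thesis unfolding kQ_def G_def e1 e2 ..
  qed
  have "normN n * rho n = F * (real n + 2) * s / (2 * sqrt 2 * Gm) * (4 * (G / (real n + 2)) / (real n + 3))"
    unfolding normN_def rho_def sq g5 kq ..
  also have "\<dots> = F * s * 4 * G / (2 * sqrt 2 * Gm * (real n + 3))"
  proof -
    have gen: "F * a * s / (r * Gm) * (4 * (G / a) / b) = F * s * 4 * G / (r * Gm * b)" if "a \<noteq> 0" for a b r :: real
      using that by (simp add: field_simps)
    show ?thesis by (rule gen) simp
  qed
  also have "\<dots> = F * s * 4 * G / (2 * sqrt 2 * (G * (F * (real n + 1)) * (sqrt pi / 2)) * (real n + 3))"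
    unfolding GG ..
  also have "\<dots> = 4 * s / (sqrt 2 * sqrt pi * ((real n + 1) * (real n + 3)))"
  proof -
    have "G \<noteq> 0" using GG Gmp by auto
    have gen: "F * s * 4 * G / (2 * r2 * (G * (F * a) * (p / 2)) * b) = 4 * s / (r2 * p * (a * b))"
      if "G \<noteq> 0" "F \<noteq> 0" "a \<noteq> 0" "b \<noteq> 0" "r2 \<noteq> 0" "p \<noteq> 0" for a b r2 p :: real
      using that by (simp add: field_simps)
    show ?thesis by (rule gen) (use \<open>G \<noteq> 0\<close> Fp in auto)
  qed
  also have "\<dots> = 4 / (sqrt 2 * sqrt pi * s)"
    unfolding ss[symmetric] using sp by (simp add: field_simps)
  also have "\<dots> = 4 / sqrt (2 * pi * (real n + 1) * (real n + 3))"
    unfolding s_def by (simp add: real_sqrt_mult mult.assoc)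
  finally show ?thesis .
qed

lemma efun_gg: "efun n x = normN n * rho n * gg (int n) x"
  unfolding efun_def gg_def by simp

lemma Cbar_JJ: "Cbar i j m = (normN i * rho i) * (normN j * rho j) * (normN m * rho m) * JJ (int i) (int j) (int m)"
proof -
  define K where "K = (normN i * rho i) * (normN j * rho j) * (normN m * rho m)"
  have "(\<lambda>x. efun i x * efun j x * efun m x * sin x ^ 4) = (\<lambda>x. K * (gg (int i) x * gg (int j) x * gg (int m) x * sin x ^ 4))"
    unfolding efun_gg K_def by (simp add: fun_eq_iff mult_ac)
  then have "Cbar i j m = integral {0..pi} (\<lambda>x. K * (gg (int i) x * gg (int j) x * gg (int m) x * sin x ^ 4))"
    unfolding Cbar_def by simp
  also have "\<dots> = K * JJ (int i) (int j) (int m)" unfolding JJ_def by simp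
  finally show ?thesis unfolding K_def .
qed

lemma ind_prod:
  fixes i j m :: nat
  shows "ind (\<bar>int j - int m\<bar> \<le> int i \<and> int i \<le> int j + int m)
    * ind (\<bar>int i - int m\<bar> \<le> int j \<and> int j \<le> int i + int m)
    * ind (\<bar>int i - int j\<bar> \<le> int m \<and> int m \<le> int i + int j)
    * ind (int j + int m - int i \<ge> 0 \<and> even (int j + int m - int i))
    * ind (int i + int m - int j \<ge> 0 \<and> even (int i + int m - int j))
    * ind (int i + int j - int m \<ge> 0 \<and> even (int i + int j - int m))
    = (if 0 \<le> int j + int m - int i \<and> 0 \<le> int i + int m - int j \<and> 0 \<le> int i + int j - int m \<and> even (int i + int j + int m) then 1 else 0)"
proof (cases "0 \<le> int j + int m - int i \<and> 0 \<le> int i + int m - int j \<and> 0 \<le> int i + int j - int m \<and> even (int i + int j + int m)")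
  case True
  then have "even (int j + int m - int i)" "even (int i + int m - int j)" "even (int i + int j - int m)" by presburger+
  with True show ?thesis unfolding ind_def by auto
next
  case False
  then have "\<not> (\<bar>int j - int m\<bar> \<le> int i \<and> int i \<le> int j + int m) \<or> \<not> (int j + int m - int i \<ge> 0 \<and> even (int j + int m - int i))"
    by presburger
  with False show ?thesis unfolding ind_def by auto
qed

theorem lemma5p8:
  fixes i j m :: nat
  shows "Cbar i j m =
    (of_int (int i + int j - int m + 2) * of_int (int i - int j + int m + 2)
      * of_int (- int i + int j + int m + 2) * of_int (int i + int j + int m + 6))
    / (4 * sqrt (2 * pi * (real i + 1) * (real i + 3) * (real j + 1) * (real j + 3)
                 * (real m + 1) * (real m + 3)))
    * ind (\<bar>int j - int m\<bar> \<le> int i \<and> int i \<le> int j + int m)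
    * ind (\<bar>int i - int m\<bar> \<le> int j \<and> int j \<le> int i + int m)
    * ind (\<bar>int i - int j\<bar> \<le> int m \<and> int m \<le> int i + int j)
    * ind (int j + int m - int i \<ge> 0 \<and> even (int j + int m - int i))
    * ind (int i + int m - int j \<ge> 0 \<and> even (int i + int m - int j))
    * ind (int i + int j - int m \<ge> 0 \<and> even (int i + int j - int m))"
proof -
  define A where "A = (real i + 1) * (real i + 3) * (real j + 1) * (real j + 3) * (real m + 1) * (real m + 3)"
  define cond where "cond = (0 \<le> int j + int m - int i \<and> 0 \<le> int i + int m - int j \<and> 0 \<le> int i + int j - int m \<and> even (int i + int j + int m))"
  have K: "(normN i * rho i) * (normN j * rho j) * (normN m * rho m) = 64 / (2 * pi * sqrt (2 * pi * A))"
  proof -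
    have "sqrt (2 * pi * (real i + 1) * (real i + 3)) * sqrt (2 * pi * (real j + 1) * (real j + 3)) * sqrt (2 * pi * (real m + 1) * (real m + 3))
        = sqrt ((2 * pi)^2 * (2 * pi * A))"
      unfolding A_def real_sqrt_mult[symmetric] by (simp add: power2_eq_square algebra_simps)
    also have "\<dots> = 2 * pi * sqrt (2 * pi * A)" by (simp only: real_sqrt_mult real_sqrt_abs) simp
    finally have e: "sqrt (2 * pi * (real i + 1) * (real i + 3)) * sqrt (2 * pi * (real j + 1) * (real j + 3)) * sqrt (2 * pi * (real m + 1) * (real m + 3))
        = 2 * pi * sqrt (2 * pi * A)" .
    show ?thesis unfolding NR using e by (simp add: field_simps)
  qed
  have FFv: "FF (int i) (int j) (int m) = (if cond then pi/128 * of_int (PP (int i) (int j) (int m)) else 0)"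
    unfolding FF_def cond_def ..
  have Ap: "A > 0" unfolding A_def by simp
  have "Cbar i j m = 64 / (2 * pi * sqrt (2 * pi * A)) * FF (int i) (int j) (int m)"
    unfolding Cbar_JJ K using JJ_FF[of "int i" "int j" "int m"] by simp
  also have "\<dots> = of_int (PP (int i) (int j) (int m)) / (4 * sqrt (2 * pi * A)) * (if cond then 1 else 0)"
    unfolding FFv using Ap by (simp add: field_simps)
  finally have C: "Cbar i j m = of_int (PP (int i) (int j) (int m)) / (4 * sqrt (2 * pi * A)) * (if cond then 1 else 0)" .
  define X where "X = (of_int (int i + int j - int m + 2) * of_int (int i - int j + int m + 2)
      * of_int (- int i + int j + int m + 2) * of_int (int i + int j + int m + 6))
    / (4 * sqrt (2 * pi * (real i + 1) * (real i + 3) * (real j + 1) * (real j + 3)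
                 * (real m + 1) * (real m + 3)))"
  have XX: "of_int (PP (int i) (int j) (int m)) / (4 * sqrt (2 * pi * A)) = (X :: real)"
  proof -
    have "2 * pi * A = 2 * pi * (real i + 1) * (real i + 3) * (real j + 1) * (real j + 3) * (real m + 1) * (real m + 3)"
      unfolding A_def by (simp only: mult.assoc)
    moreover have "(of_int (PP (int i) (int j) (int m)) :: real) = of_int (int i + int j - int m + 2) * of_int (int i - int j + int m + 2)
      * of_int (- int i + int j + int m + 2) * of_int (int i + int j + int m + 6)"
      unfolding PP_def by (simp only: of_int_mult)
    ultimately show ?thesis unfolding X_def by simp
  qed
  have "X * ind (\<bar>int j - int m\<bar> \<le> int i \<and> int i \<le> int j + int m)
    * ind (\<bar>int i - int m\<bar> \<le> int j \<and> int j \<le> int i + int m)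
    * ind (\<bar>int i - int j\<bar> \<le> int m \<and> int m \<le> int i + int j)
    * ind (int j + int m - int i \<ge> 0 \<and> even (int j + int m - int i))
    * ind (int i + int m - int j \<ge> 0 \<and> even (int i + int m - int j))
    * ind (int i + int j - int m \<ge> 0 \<and> even (int i + int j - int m))
    = X * (ind (\<bar>int j - int m\<bar> \<le> int i \<and> int i \<le> int j + int m)
    * ind (\<bar>int i - int m\<bar> \<le> int j \<and> int j \<le> int i + int m)
    * ind (\<bar>int i - int j\<bar> \<le> int m \<and> int m \<le> int i + int j)
    * ind (int j + int m - int i \<ge> 0 \<and> even (int j + int m - int i))
    * ind (int i + int m - int j \<ge> 0 \<and> even (int i + int m - int j))
    * ind (int i + int j - int m \<ge> 0 \<and> even (int i + int j - int m)))"
    by (simp only: mult.assoc)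
  also have "\<dots> = X * (if cond then 1 else 0)" unfolding ind_prod cond_def ..
  finally have calc: "X * ind (\<bar>int j - int m\<bar> \<le> int i \<and> int i \<le> int j + int m)
    * ind (\<bar>int i - int m\<bar> \<le> int j \<and> int j \<le> int i + int m)
    * ind (\<bar>int i - int j\<bar> \<le> int m \<and> int m \<le> int i + int j)
    * ind (int j + int m - int i \<ge> 0 \<and> even (int j + int m - int i))
    * ind (int i + int m - int j \<ge> 0 \<and> even (int i + int m - int j))
    * ind (int i + int j - int m \<ge> 0 \<and> even (int i + int j - int m)) = X * (if cond then 1 else 0)" .
  show ?thesis unfolding C XX X_def[symmetric] by (simp only: calc)
qed


end
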